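(* Let $0<k<n$ and let $\mathcal{F}=(\mathcal{F}_{n-k},\dots,\mathcal{F}_2,\mathcal{F}_1)$ be a Ferrers diagram of size $m$ embedded in a $k\times(n-k)$ box. Set $\mathcal{F}_0=k$. Then the number $\mathrm{ind}_m(\mathcal{F})$ of Ferrers diagrams of size $m$ embedded in a $k\times(n-k)$ box that precede $\mathcal{F}$ in the order defined below is \[\mathrm{ind}_m(\mathcal{F})=\sum_{j=1}^{n-k}\ \sum_{a=\mathcal{F}_j+1}^{\mathcal{F}_{j-1}} p\Bigl(a,\,n-k-j,\,m-\sum_{i=1}^{j-1}\mathcal{F}_i-a\Bigr).\]
   Context: A Ferrers diagram embedded in a $k\times(n-k)$ box is represented by an integer vector $(\mathcal{F}_{n-k},\dots,\mathcal{F}_1)$ with $0\le\mathcal{F}_{i+1}\le\mathcal{F}_i\le k$ for $1\le i\le n-k-1$, where $\mathcal{F}_i$ is the number of dots in the $i$-th column, columns numbered from right to left; its size is $\sum_i\mathcal{F}_i$. Order on diagrams of the same size: $\mathcal{F}<\widetilde{\mathcal{F}}$ if $\mathcal{F}_i>\widetilde{\mathcal{F}}_i$ for the least index $i$ with $\mathcal{F}_i\ne\widetilde{\mathcal{F}}_i$. $p(a,\eta,s)$ is the number of partitions of $s$ whose Ferrers diagram fits in an $a\times\eta$ box, with $p(a,\eta,0)=1$ and $p(a,\eta,s)=0$ if $s<0$ or $s>a\eta$. An empty inner sum is $0$. *)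

theory Defs
  imports Main
begin

text \<open>A Ferrers diagram in an h x w box (h rows, w columns), given by column heights
  F 1, ..., F w (columns numbered right to left), with F (i+1) \<le> F i \<le> h.\<close>
definition ferrers :: "nat \<Rightarrow> nat \<Rightarrow> (nat \<Rightarrow> nat) \<Rightarrow> bool" where
  "ferrers h w F \<longleftrightarrow> (\<forall>i. F i \<le> h) \<and> (\<forall>i. 1 \<le> i \<and> i < w \<longrightarrow> F (i+1) \<le> F i)
      \<and> (\<forall>i. i = 0 \<or> w < i \<longrightarrow> F i = 0)"

definition fsize :: "nat \<Rightarrow> (nat \<Rightarrow> nat) \<Rightarrow> nat" where
  "fsize w F = (\<Sum>i=1..w. F i)"

definition ferrers_less :: "nat \<Rightarrow> (nat \<Rightarrow> nat) \<Rightarrow> (nat \<Rightarrow> nat) \<Rightarrow> bool" where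
  "ferrers_less w G F \<longleftrightarrow> (\<exists>i\<in>{1..w}. G i > F i \<and> (\<forall>j\<in>{1..<i}. G j = F j))"

text \<open>p(a, eta, s): number of partitions of s whose Ferrers diagram fits in an a x eta box
  (at most eta parts, each at most a); 0 for s < 0.\<close>
definition pbox :: "nat \<Rightarrow> nat \<Rightarrow> int \<Rightarrow> nat" where
  "pbox a eta s = (if s < 0 then 0 else card {F. ferrers a eta F \<and> fsize eta F = nat s})"

definition ind :: "nat \<Rightarrow> nat \<Rightarrow> nat \<Rightarrow> (nat \<Rightarrow> nat) \<Rightarrow> nat" where
  "ind k n m F = card {G. ferrers k (n-k) G \<and> fsize (n-k) G = m \<and> ferrers_less (n-k) G F}"

end

theory Submission imports Defs "HOL-Library.FuncSet" begin

lemma ferrers_mono: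
  assumes "ferrers h w G" "1 \<le> i" "i \<le> i'"
  shows "G i' \<le> G i"
  using assms(3)
proof (induction i' rule: dec_induct)
  case base then show ?case by simp
next
  case (step q)
  have "G (Suc q) \<le> G q"
  proof (cases "q < w")
    case True then show ?thesis using assms(1,2) step(1) unfolding ferrers_def by (metis Suc_eq_plus1 le_trans)
  next
    case False then show ?thesis using assms(1) unfolding ferrers_def by auto
  qed
  then show ?case using step by simp
qed

lemma finite_ferrers: "finite {G. ferrers h w G}"
proof -
  let ?A = "{G. ferrers h w G}"
  have inj: "inj_on (\<lambda>G. restrict G {..w}) ?A"
  proof (rule inj_onI)
    fix G1 G2 assume a: "G1 \<in> ?A" "G2 \<in> ?A" "restrict G1 {..w} = restrict G2 {..w}"
    show "G1 = G2"
    proof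
      fix i show "G1 i = G2 i"
      proof (cases "i \<le> w")
        case True then show ?thesis using a(3) by (metis atMost_iff restrict_apply')
      next
        case False then show ?thesis using a(1,2) unfolding ferrers_def by auto
      qed
    qed
  qed
  have "(\<lambda>G. restrict G {..w}) ` ?A \<subseteq> PiE {..w} (\<lambda>_. {..h})"
    unfolding ferrers_def by (auto simp: PiE_def extensional_def)
  then have "finite ((\<lambda>G. restrict G {..w}) ` ?A)"
    by (rule finite_subset) (intro finite_PiE, auto)
  then show ?thesis using finite_imageD inj by blast
qed

lemma sum_split:
  fixes G :: "nat \<Rightarrow> 'a::comm_monoid_add"
  assumes "1 \<le> j" "j \<le> w"
  shows "(\<Sum>i=1..w. G i) = (\<Sum>i\<in>{1..<j}. G i) + G j + (\<Sum>i=1..w-j. G (i+j))"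
proof -
  have "(\<Sum>i=1..w. G i) = (\<Sum>i\<in>{1..<j}. G i) + (\<Sum>i\<in>{j..<Suc w}. G i)"
    using assms by (metis atLeastLessThanSuc_atLeastAtMost le_SucI sum.atLeastLessThan_concat)
  moreover have "(\<Sum>i\<in>{j..<Suc w}. G i) = G j + (\<Sum>i\<in>{Suc j..<Suc w}. G i)"
    by (rule sum.atLeast_Suc_lessThan) (use assms in simp)
  moreover have "(\<Sum>i\<in>{Suc j..<Suc w}. G i) = (\<Sum>i=1..w-j. G (i+j))"
  proof -
    have "{Suc j..<Suc w} = {1+j..<(Suc (w-j))+j}" using assms by auto
    then have "(\<Sum>i\<in>{Suc j..<Suc w}. G i) = (\<Sum>i\<in>{1..<Suc (w-j)}. G (i+j))"
      by (simp only: sum.shift_bounds_nat_ivl)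
    then show ?thesis by (simp add: atLeastLessThanSuc_atLeastAtMost)
  qed
  ultimately show ?thesis by (simp add: add.assoc)
qed

definition Sja :: "nat \<Rightarrow> nat \<Rightarrow> nat \<Rightarrow> (nat\<Rightarrow>nat) \<Rightarrow> nat \<Rightarrow> nat \<Rightarrow> (nat\<Rightarrow>nat) set" where
  "Sja k w m F j a = {G. ferrers k w G \<and> fsize w G = m \<and> (\<forall>i\<in>{1..<j}. G i = F i) \<and> G j = a}"

lemma decomp:
  assumes "ferrers k w F"
  shows "{G. ferrers k w G \<and> fsize w G = m \<and> ferrers_less w G F} =
     (\<Union>j\<in>{1..w}. \<Union>a\<in>{(F(0:=k)) j + 1 .. (F(0:=k)) (j-1)}. Sja k w m F j a)"
proof (rule set_eqI, rule iffI)
  fix G assume "G \<in> {G. ferrers k w G \<and> fsize w G = m \<and> ferrers_less w G F}"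
  then have G: "ferrers k w G" "fsize w G = m" and "ferrers_less w G F" by auto
  then obtain i where i: "i \<in> {1..w}" "G i > F i" "\<forall>j\<in>{1..<i}. G j = F j"
    unfolding ferrers_less_def by blast
  have "G i \<le> (F(0:=k)) (i-1)"
  proof (cases "i = 1")
    case True then show ?thesis using G(1) unfolding ferrers_def by simp
  next
    case False
    then have "G i \<le> G (i-1)" using ferrers_mono[OF G(1), of "i-1" i] i(1) by auto
    moreover have "G (i-1) = F (i-1)" using i False by auto
    ultimately show ?thesis using False i(1) by auto
  qed
  then have "G \<in> Sja k w m F i (G i)" "G i \<in> {(F(0:=k)) i + 1 .. (F(0:=k)) (i-1)}"
    using G i unfolding Sja_def by auto
  then show "G \<in> (\<Union>j\<in>{1..w}. \<Union>a\<in>{(F(0:=k)) j + 1 .. (F(0:=k)) (j-1)}. Sja k w m F j a)"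
    using i(1) by blast
next
  fix G assume "G \<in> (\<Union>j\<in>{1..w}. \<Union>a\<in>{(F(0:=k)) j + 1 .. (F(0:=k)) (j-1)}. Sja k w m F j a)"
  then obtain j a where j: "j \<in> {1..w}" "a \<in> {(F(0:=k)) j + 1 .. (F(0:=k)) (j-1)}" "G \<in> Sja k w m F j a"
    by blast
  then have "ferrers_less w G F" unfolding ferrers_less_def Sja_def
    by (intro bexI[of _ j]) auto
  then show "G \<in> {G. ferrers k w G \<and> fsize w G = m \<and> ferrers_less w G F}"
    using j unfolding Sja_def by auto
qed

lemma card_Sja:
  assumes F: "ferrers k w F" and j: "1 \<le> j" "j \<le> w"
    and a: "F j < a" "a \<le> (F(0:=k)) (j-1)"
  shows "card (Sja k w m F j a) = pbox a (w-j) (int m - (\<Sum>i=1..j-1. int (F i)) - int a)"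
proof -
  have ak: "a \<le> k" using a F j unfolding ferrers_def by (cases "j = 1") (auto intro: le_trans)
  have sumeq: "(\<Sum>i=1..j-1. int (F i)) = int (\<Sum>i\<in>{1..<j}. F i)"
  proof -
    have "{1..j-1} = {1..<j}" using j by auto
    then show ?thesis by (simp add: of_nat_sum)
  qed
  show ?thesis
  proof (cases "int m - (\<Sum>i=1..j-1. int (F i)) - int a < 0")
    case True
    have "Sja k w m F j a = {}"
    proof (rule ccontr)
      assume "Sja k w m F j a \<noteq> {}"
      then obtain G where G: "G \<in> Sja k w m F j a" by blast
      then have "m = (\<Sum>i\<in>{1..<j}. G i) + G j + (\<Sum>i=1..w-j. G (i+j))"
        unfolding Sja_def fsize_def using sum_split[OF j, of G] by auto
      moreover have "(\<Sum>i\<in>{1..<j}. G i) = (\<Sum>i\<in>{1..<j}. F i)"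
        using G unfolding Sja_def by (intro sum.cong) auto
      ultimately have "m \<ge> (\<Sum>i\<in>{1..<j}. F i) + a" using G unfolding Sja_def by auto
      then show False using True sumeq by linarith
    qed
    then show ?thesis using True unfolding pbox_def by simp
  next
    case False
    define s where "s = m - (\<Sum>i\<in>{1..<j}. F i) - a"
    have s: "nat (int m - (\<Sum>i=1..j-1. int (F i)) - int a) = s"
      "m = (\<Sum>i\<in>{1..<j}. F i) + a + s"
      using False sumeq unfolding s_def by linarith+
    let ?T = "{H. ferrers a (w-j) H \<and> fsize (w-j) H = s}"
    let ?f = "\<lambda>G i. if i = 0 then 0 else G (i+j)"
    let ?g = "\<lambda>H i. if i < j then F i else if i = j then a else H (i-j)"
    have "bij_betw ?f (Sja k w m F j a) ?T"
    proof (rule bij_betw_byWitness[where f'="?g"])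
      show "\<forall>G\<in>Sja k w m F j a. ?g (?f G) = G"
      proof
        fix G assume G: "G \<in> Sja k w m F j a"
        show "?g (?f G) = G"
        proof
          fix i show "?g (?f G) i = G i"
          proof (cases "i < j")
            case True
            then show ?thesis using G F unfolding Sja_def ferrers_def by (cases "i = 0") auto
          next
            case False then show ?thesis using G unfolding Sja_def by auto
          qed
        qed
      qed
      show "\<forall>H\<in>?T. ?f (?g H) = H"
      proof
        fix H assume H: "H \<in> ?T"
        show "?f (?g H) = H"
        proof
          fix i show "?f (?g H) i = H i" using H unfolding ferrers_def by auto
        qed
      qed
      show "?f ` Sja k w m F j a \<subseteq> ?T"
      proof
        fix H assume "H \<in> ?f ` Sja k w m F j a"
        then obtain G where G: "G \<in> Sja k w m F j a" and H: "H = ?f G" by blast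
        have Gf: "ferrers k w G" "fsize w G = m" "\<forall>i\<in>{1..<j}. G i = F i" "G j = a"
          using G unfolding Sja_def by auto
        have "ferrers a (w-j) H"
          unfolding ferrers_def H
        proof (intro conjI allI impI)
          fix i show "(if i = 0 then 0 else G (i + j)) \<le> a"
            using ferrers_mono[OF Gf(1), of j "i+j"] j Gf(4) by auto
        next
          fix i assume "1 \<le> i \<and> i < w - j"
          then show "(if i + 1 = 0 then 0 else G (i + 1 + j)) \<le> (if i = 0 then 0 else G (i + j))"
            using Gf(1) unfolding ferrers_def by auto
        next
          fix i assume "i = 0 \<or> w - j < i"
          then show "(if i = 0 then 0 else G (i + j)) = 0"
            using Gf(1) unfolding ferrers_def by auto
        qed
        moreover have "fsize (w-j) H = s"
        proof -
          have "m = (\<Sum>i\<in>{1..<j}. G i) + G j + (\<Sum>i=1..w-j. G (i+j))"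
            using Gf(2) unfolding fsize_def using sum_split[OF j, of G] by auto
          moreover have "(\<Sum>i\<in>{1..<j}. G i) = (\<Sum>i\<in>{1..<j}. F i)"
            using Gf(3) by (intro sum.cong) auto
          moreover have "fsize (w-j) H = (\<Sum>i=1..w-j. G (i+j))"
            unfolding fsize_def H by (intro sum.cong) auto
          ultimately show ?thesis using s Gf(4) by linarith
        qed
        ultimately show "H \<in> ?T" by simp
      qed
      show "?g ` ?T \<subseteq> Sja k w m F j a"
      proof
        fix G assume "G \<in> ?g ` ?T"
        then obtain H where H: "H \<in> ?T" and G: "G = ?g H" by blast
        have Hf: "ferrers a (w-j) H" "fsize (w-j) H = s" using H by auto
        have "ferrers k w G"
          unfolding ferrers_def
        proof (intro conjI allI impI)
          fix i show "G i \<le> k"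
            using Hf(1) F ak unfolding G ferrers_def by (auto intro: le_trans)
        next
          fix i assume i: "1 \<le> i \<and> i < w"
          consider "i + 1 < j" | "i + 1 = j" | "i = j" | "i > j" by linarith
          then show "G (i+1) \<le> G i"
          proof cases
            case 1 then show ?thesis using F i unfolding G ferrers_def by auto
          next
            case 2 then show ?thesis using a i unfolding G by auto
          next
            case 3 then show ?thesis using Hf(1) unfolding G ferrers_def by auto
          next
            case 4
            then have "H (i + 1 - j) \<le> H (i - j)"
              using Hf(1) i unfolding ferrers_def
              by (metis Suc_diff_le Suc_eq_plus1 diff_less_mono less_imp_le_nat zero_less_diff less_one not_less)
            then show ?thesis using 4 unfolding G by auto
          qed
        next
          fix i assume i: "i = 0 \<or> w < i"
          then show "G i = 0" using F Hf(1) j unfolding G ferrers_def by auto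
        qed
        moreover have "fsize w G = m"
        proof -
          have "fsize w G = (\<Sum>i\<in>{1..<j}. G i) + G j + (\<Sum>i=1..w-j. G (i+j))"
            unfolding fsize_def using sum_split[OF j, of G] by auto
          moreover have "(\<Sum>i\<in>{1..<j}. G i) = (\<Sum>i\<in>{1..<j}. F i)"
            unfolding G by (intro sum.cong) auto
          moreover have "(\<Sum>i=1..w-j. G (i+j)) = fsize (w-j) H"
            unfolding fsize_def G by (intro sum.cong) auto
          ultimately show ?thesis using s Hf(2) unfolding G by simp
        qed
        ultimately show "G \<in> Sja k w m F j a" unfolding Sja_def G by auto
      qed
    qed
    then have "card (Sja k w m F j a) = card ?T" by (rule bij_betw_same_card)
    then show ?thesis using False s unfolding pbox_def by simp
  qed
qed

lemma finite_Sja: "finite (Sja k w m F j a)"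
  by (rule finite_subset[OF _ finite_ferrers[of k w]]) (auto simp: Sja_def)

theorem theorem7:
  fixes k n m :: nat and F :: "nat \<Rightarrow> nat"
  assumes "0 < k" and "k < n"
    and "ferrers k (n-k) F" and "fsize (n-k) F = m"
  shows "ind k n m F =
    (\<Sum>j=1..n-k. \<Sum>a\<in>{(F(0:=k)) j + 1 .. (F(0:=k)) (j-1)}.
        pbox a (n-k-j) (int m - (\<Sum>i=1..j-1. int (F i)) - int a))"
proof -
  define w where "w = n - k"
  have F: "ferrers k w F" using assms unfolding w_def by simp
  have "ind k n m F = card (\<Union>j\<in>{1..w}. \<Union>a\<in>{(F(0:=k)) j + 1 .. (F(0:=k)) (j-1)}. Sja k w m F j a)"
    unfolding ind_def w_def[symmetric] decomp[OF F] ..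
  also have "\<dots> = (\<Sum>j=1..w. card (\<Union>a\<in>{(F(0:=k)) j + 1 .. (F(0:=k)) (j-1)}. Sja k w m F j a))"
  proof (rule card_UN_disjoint)
    show "finite {1..w}" by simp
    show "\<forall>j\<in>{1..w}. finite (\<Union>a\<in>{(F(0:=k)) j + 1 .. (F(0:=k)) (j-1)}. Sja k w m F j a)"
      using finite_Sja by auto
    show "\<forall>j1\<in>{1..w}. \<forall>j2\<in>{1..w}. j1 \<noteq> j2 \<longrightarrow>
      (\<Union>a\<in>{(F(0:=k)) j1 + 1 .. (F(0:=k)) (j1-1)}. Sja k w m F j1 a) \<inter>
      (\<Union>a\<in>{(F(0:=k)) j2 + 1 .. (F(0:=k)) (j2-1)}. Sja k w m F j2 a) = {}"
    proof (intro ballI impI)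
      fix j1 j2 assume j: "j1 \<in> {1..w}" "j2 \<in> {1..w}" "j1 \<noteq> j2"
      have *: "False" if "ja < jb" "ja \<in> {1..w}" "jb \<in> {1..w}"
        "aa \<in> {(F(0:=k)) ja + 1 .. (F(0:=k)) (ja-1)}" "G \<in> Sja k w m F ja aa"
        "G \<in> Sja k w m F jb bb" for ja jb aa bb G
        using that unfolding Sja_def by auto
      show "(\<Union>a\<in>{(F(0:=k)) j1 + 1 .. (F(0:=k)) (j1-1)}. Sja k w m F j1 a) \<inter>
      (\<Union>a\<in>{(F(0:=k)) j2 + 1 .. (F(0:=k)) (j2-1)}. Sja k w m F j2 a) = {}"
      proof (rule ccontr)
        assume "\<not> ?thesis"
        then obtain G a1 a2 where g: "a1 \<in> {(F(0:=k)) j1 + 1 .. (F(0:=k)) (j1-1)}" "G \<in> Sja k w m F j1 a1"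
          "a2 \<in> {(F(0:=k)) j2 + 1 .. (F(0:=k)) (j2-1)}" "G \<in> Sja k w m F j2 a2" by blast
        show False
        proof (cases "j1 < j2")
          case True then show ?thesis using *[of j1 j2 a1 G a2] j g by blast
        next
          case False then have "j2 < j1" using j by linarith
          then show ?thesis using *[of j2 j1 a2 G a1] j g by blast
        qed
      qed
    qed
  qed
  also have "\<dots> = (\<Sum>j=1..w. \<Sum>a\<in>{(F(0:=k)) j + 1 .. (F(0:=k)) (j-1)}. card (Sja k w m F j a))"
  proof (rule sum.cong[OF refl], rule card_UN_disjoint)
    fix j show "finite {(F(0:=k)) j + 1 .. (F(0:=k)) (j-1)}" by simp
    show "\<forall>a\<in>{(F(0:=k)) j + 1 .. (F(0:=k)) (j-1)}. finite (Sja k w m F j a)" using finite_Sja by auto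
    show "\<forall>a\<in>{(F(0:=k)) j + 1 .. (F(0:=k)) (j-1)}. \<forall>b\<in>{(F(0:=k)) j + 1 .. (F(0:=k)) (j-1)}.
       a \<noteq> b \<longrightarrow> Sja k w m F j a \<inter> Sja k w m F j b = {}"
      unfolding Sja_def by auto
  qed
  also have "\<dots> = (\<Sum>j=1..w. \<Sum>a\<in>{(F(0:=k)) j + 1 .. (F(0:=k)) (j-1)}.
        pbox a (w-j) (int m - (\<Sum>i=1..j-1. int (F i)) - int a))"
  proof (intro sum.cong refl)
    fix j a assume j: "j \<in> {1..w}" and a: "a \<in> {(F(0:=k)) j + 1 .. (F(0:=k)) (j-1)}"
    have "F j < a" "a \<le> (F(0:=k)) (j-1)" using j a by auto
    then show "card (Sja k w m F j a) = pbox a (w-j) (int m - (\<Sum>i=1..j-1. int (F i)) - int a)"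
      using card_Sja[OF F] j by auto
  qed
  finally show ?thesis unfolding w_def .
qed

end
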